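(* Let $G$ be a hued patch and let $\varphi$ be a 4-coloring (with colors in $\mathbb{Z}_2^2$) of the boundary of the outer face of $G$. If $\varphi$ extends to a 4-coloring of $G$, then $\varphi$ is viable.
   Context: A patch is a connected plane graph all of whose faces, except possibly the outer face, have length three. A hued graph is a graph $G$ with a proper coloring $\psi_G:V(G)\to\mathbb{Z}_3$ (hue); a dappled graph is a hued graph with additionally a proper coloring $\varphi_G:V(G)\to\mathbb{Z}_2^2$ (color). For a hued graph $H$ and a proper coloring $\theta:V(H)\to\mathbb{Z}_2^2$, $H^\theta$ denotes the dappled graph with color $\theta$. A homomorphism of dappled graphs maps adjacent vertices to adjacent vertices and preserves hue and color. The dappled triangular grid $\mathbf{T}$ has vertex set $\mathbb{Z}^2$, with $(i_1,j_1)$ and $(i_2,j_2)$ adjacent iff $(i_2-i_1,j_2-j_1)\in\{\pm(1,0),\pm(0,1),\pm(1,1)\}$, hue $(i+j)\bmod 3$ and color $(i\bmod 2,j\bmod 2)$ at $(i,j)$. A 4-coloring $\varphi$ of a connected hued graph $C$ is viable if $C^\varphi$ has a homomorphism to $\mathbf{T}$. The boundary of the outer face of $G$ is regarded as a hued graph with the hues inherited from $G$. *)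

theory Defs
  imports Main "HOL-Library.Numeral_Type"
begin

definition simple_graph :: "'v set \<Rightarrow> ('v \<Rightarrow> 'v \<Rightarrow> bool) \<Rightarrow> bool" where
  "simple_graph V E \<longleftrightarrow> finite V \<and> (\<forall>u v. E u v \<longrightarrow> u \<in> V \<and> v \<in> V \<and> u \<noteq> v \<and> E v u)"

definition connected_graph :: "'v set \<Rightarrow> ('v \<Rightarrow> 'v \<Rightarrow> bool) \<Rightarrow> bool" where
  "connected_graph V E \<longleftrightarrow> V \<noteq> {} \<and> (\<forall>u\<in>V. \<forall>v\<in>V. E\<^sup>*\<^sup>* u v)"

definition nbrs :: "('v \<Rightarrow> 'v \<Rightarrow> bool) \<Rightarrow> 'v \<Rightarrow> 'v set" where
  "nbrs E u = {v. E u v}"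

definition darts :: "('v \<Rightarrow> 'v \<Rightarrow> bool) \<Rightarrow> ('v \<times> 'v) set" where
  "darts E = {(u, v). E u v}"

definition rotation_system :: "'v set \<Rightarrow> ('v \<Rightarrow> 'v \<Rightarrow> bool) \<Rightarrow> ('v \<Rightarrow> 'v \<Rightarrow> 'v) \<Rightarrow> bool" where
  "rotation_system V E \<sigma> \<longleftrightarrow>
     (\<forall>u\<in>V. bij_betw (\<sigma> u) (nbrs E u) (nbrs E u) \<and>
             (\<forall>v\<in>nbrs E u. \<forall>w\<in>nbrs E u. \<exists>k. (\<sigma> u ^^ k) v = w))"

definition face_step :: "('v \<Rightarrow> 'v \<Rightarrow> 'v) \<Rightarrow> 'v \<times> 'v \<Rightarrow> 'v \<times> 'v" where
  "face_step \<sigma> d = (snd d, \<sigma> (snd d) (fst d))"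

definition face_orbit :: "('v \<Rightarrow> 'v \<Rightarrow> 'v) \<Rightarrow> 'v \<times> 'v \<Rightarrow> ('v \<times> 'v) set" where
  "face_orbit \<sigma> d = {(face_step \<sigma> ^^ k) d | k. True}"

definition faces :: "('v \<Rightarrow> 'v \<Rightarrow> bool) \<Rightarrow> ('v \<Rightarrow> 'v \<Rightarrow> 'v) \<Rightarrow> ('v \<times> 'v) set set" where
  "faces E \<sigma> = face_orbit \<sigma> ` darts E"

definition num_faces :: "('v \<Rightarrow> 'v \<Rightarrow> bool) \<Rightarrow> ('v \<Rightarrow> 'v \<Rightarrow> 'v) \<Rightarrow> nat" where
  "num_faces E \<sigma> = (if darts E = {} then 1 else card (faces E \<sigma>))"

text \<open>A connected plane graph, given combinatorially: a connected simple graph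
  with a rotation system of genus 0 (Euler's formula V - E + F = 2), together
  with a designated outer face Out (a face, i.e. an orbit of darts; Out = {} when
  there are no edges).\<close>
definition plane_graph ::
  "'v set \<Rightarrow> ('v \<Rightarrow> 'v \<Rightarrow> bool) \<Rightarrow> ('v \<Rightarrow> 'v \<Rightarrow> 'v) \<Rightarrow> ('v \<times> 'v) set \<Rightarrow> bool" where
  "plane_graph V E \<sigma> Out \<longleftrightarrow>
     simple_graph V E \<and> connected_graph V E \<and> rotation_system V E \<sigma> \<and>
     int (card V) - int (card (darts E) div 2) + int (num_faces E \<sigma>) = 2 \<and>
     (if darts E = {} then Out = {} else Out \<in> faces E \<sigma>)"

definition patch ::
  "'v set \<Rightarrow> ('v \<Rightarrow> 'v \<Rightarrow> bool) \<Rightarrow> ('v \<Rightarrow> 'v \<Rightarrow> 'v) \<Rightarrow> ('v \<times> 'v) set \<Rightarrow> bool" where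
  "patch V E \<sigma> Out \<longleftrightarrow> plane_graph V E \<sigma> Out \<and> (\<forall>f\<in>faces E \<sigma>. f \<noteq> Out \<longrightarrow> card f = 3)"

definition bd_verts :: "'v set \<Rightarrow> ('v \<Rightarrow> 'v \<Rightarrow> bool) \<Rightarrow> ('v \<times> 'v) set \<Rightarrow> 'v set" where
  "bd_verts V E Out = (if darts E = {} then V else fst ` Out)"

definition bd_adj :: "('v \<times> 'v) set \<Rightarrow> 'v \<Rightarrow> 'v \<Rightarrow> bool" where
  "bd_adj Out u v \<longleftrightarrow> (u, v) \<in> Out \<or> (v, u) \<in> Out"

definition proper_on :: "'v set \<Rightarrow> ('v \<Rightarrow> 'v \<Rightarrow> bool) \<Rightarrow> ('v \<Rightarrow> 'c) \<Rightarrow> bool" where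
  "proper_on V E c \<longleftrightarrow> (\<forall>u\<in>V. \<forall>v\<in>V. E u v \<longrightarrow> c u \<noteq> c v)"

text \<open>The dappled triangular grid T: Z_3 = type 3, Z_2^2 = type 2 \<times> 2.\<close>
definition T_adj :: "int \<times> int \<Rightarrow> int \<times> int \<Rightarrow> bool" where
  "T_adj p q \<longleftrightarrow> (fst q - fst p, snd q - snd p) \<in>
     {(1,0), (-1,0), (0,1), (0,-1), (1,1), (-1,-1)}"

definition T_hue :: "int \<times> int \<Rightarrow> 3" where
  "T_hue p = of_int (fst p + snd p)"

definition T_color :: "int \<times> int \<Rightarrow> 2 \<times> 2" where
  "T_color p = (of_int (fst p), of_int (snd p))"

definition dappled_hom_T ::
  "'v set \<Rightarrow> ('v \<Rightarrow> 'v \<Rightarrow> bool) \<Rightarrow> ('v \<Rightarrow> 3) \<Rightarrow> ('v \<Rightarrow> 2 \<times> 2) \<Rightarrow> ('v \<Rightarrow> int \<times> int) \<Rightarrow> bool" where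
  "dappled_hom_T C A hue col f \<longleftrightarrow>
     (\<forall>u\<in>C. \<forall>v\<in>C. A u v \<longrightarrow> T_adj (f u) (f v)) \<and>
     (\<forall>u\<in>C. T_hue (f u) = hue u \<and> T_color (f u) = col u)"

definition viable :: "'v set \<Rightarrow> ('v \<Rightarrow> 'v \<Rightarrow> bool) \<Rightarrow> ('v \<Rightarrow> 3) \<Rightarrow> ('v \<Rightarrow> 2 \<times> 2) \<Rightarrow> bool" where
  "viable C A hue col \<longleftrightarrow> (\<exists>f. dappled_hom_T C A hue col f)"

end

theory Submission
  imports Defs "HOL-Library.Function_Algebras" Complex_Main
begin


lemma (in vector_space) indep_family:
  assumes fin: "finite I"
    and H: "\<And>c. (\<Sum>i\<in>I. c i *s x i) = 0 \<Longrightarrow> \<forall>i\<in>I. c i = 0"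
  shows "independent (x ` I) \<and> card (x ` I) = card I"
proof -
  have inj: "inj_on x I"
  proof (rule inj_onI, rule ccontr)
    fix i j assume ij: "i \<in> I" "j \<in> I" "x i = x j" "i \<noteq> j"
    define c where "c k = (if k = i then (1::'a) else if k = j then -1 else 0)" for k
    have "(\<Sum>k\<in>I. c k *s x k) = (\<Sum>k\<in>I. (if k = i then x i else 0) - (if k = j then x j else 0))"
      using ij(4) by (intro sum.cong) (auto simp: c_def)
    also have "\<dots> = x i - x j" using fin ij by (simp add: sum_subtractf)
    also have "\<dots> = 0" using ij by simp
    finally have "\<forall>k\<in>I. c k = 0" by (rule H)
    then show False using ij by (auto simp: c_def)
  qed
  have "independent (x ` I)"
    unfolding independent_explicit_module
  proof (intro allI impI)
    fix t u v assume t: "finite t" "t \<subseteq> x ` I" "(\<Sum>v\<in>t. u v *s v) = 0" "v \<in> t"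
    define c where "c i = (if x i \<in> t then u (x i) else 0)" for i
    define J where "J = {i\<in>I. x i \<in> t}"
    have tJ: "t = x ` J" using t(2) by (auto simp: J_def)
    have injJ: "inj_on x J" using inj by (rule inj_on_subset) (auto simp: J_def)
    have "(\<Sum>i\<in>I. c i *s x i) = (\<Sum>i\<in>J. c i *s x i)"
      using fin by (intro sum.mono_neutral_right) (auto simp: J_def c_def)
    also have "\<dots> = (\<Sum>i\<in>J. u (x i) *s x i)"
      by (rule sum.cong) (auto simp: J_def c_def)
    also have "\<dots> = (\<Sum>v\<in>t. u v *s v)"
      unfolding tJ using injJ by (simp add: sum.reindex)
    also have "\<dots> = 0" by (rule t(3))
    finally have "\<forall>i\<in>I. c i = 0" by (rule H)
    moreover obtain i where "i \<in> I" "v = x i" using t(2,4) by blast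
    ultimately show "u v = 0" using t(4) by (auto simp: c_def)
  qed
  then show ?thesis using inj card_image by blast
qed

lemma sum_fun_apply: "(sum F A) x = (\<Sum>a\<in>A. F a x)"
  by (induct A rule: infinite_finite_induct) auto

lemma swap_eq_iff: "(x = prod.swap b) = (b = prod.swap x)"
  by (metis swap_swap)

lemma core_exact:
  fixes V :: "'v set" and E :: "'v \<Rightarrow> 'v \<Rightarrow> bool" and D :: "('v \<times> 'v) set"
    and fc :: "'v \<times> 'v \<Rightarrow> ('v \<times> 'v) set" and Out :: "('v \<times> 'v) set" and g :: "'v \<times> 'v \<Rightarrow> real"
  assumes finV: "finite V"
    and D_def: "D = {(u, v). E u v}"
    and Esym: "\<And>u v. E u v \<Longrightarrow> u \<in> V \<and> v \<in> V \<and> u \<noteq> v \<and> E v u"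
    and conn: "\<And>u v. u \<in> V \<Longrightarrow> v \<in> V \<Longrightarrow> E\<^sup>*\<^sup>* u v"
    and fc_sub: "\<And>a. a \<in> D \<Longrightarrow> a \<in> fc a \<and> fc a \<subseteq> D"
    and fc_eq: "\<And>a b. a \<in> D \<Longrightarrow> b \<in> fc a \<Longrightarrow> fc b = fc a"
    and closed: "\<And>a k. a \<in> D \<Longrightarrow> (\<Sum>b\<in>fc a. k (snd b) - k (fst b)) = (0::real)"
    and OutF: "Out \<in> fc ` D"
    and dual: "\<And>R. Out \<in> R \<Longrightarrow> R \<subseteq> fc ` D \<Longrightarrow> R \<noteq> fc ` D \<Longrightarrow>
                  \<exists>a\<in>D. fc a \<notin> R \<and> fc (prod.swap a) \<in> R"
    and euler: "card V + card (fc ` D) = card D div 2 + 2"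
    and anti: "\<And>a. a \<in> D \<Longrightarrow> g (prod.swap a) = - g a"
    and zero: "\<And>a. a \<in> D \<Longrightarrow> fc a \<noteq> Out \<Longrightarrow> (\<Sum>b\<in>fc a. g b) = 0"
  shows "\<exists>h. \<forall>a\<in>D. g a = h (snd a) - h (fst a)"
proof (rule ccontr)
  assume nex: "\<not> ?thesis"
  define sc :: "real \<Rightarrow> ('v \<times> 'v \<Rightarrow> real) \<Rightarrow> ('v \<times> 'v \<Rightarrow> real)" where
    "sc = (\<lambda>c f x. c * f x)"
  interpret fv: vector_space sc
    by unfold_locales (auto simp: sc_def fun_eq_iff algebra_simps)
  have finD: "finite D"
  proof -
    have "D \<subseteq> V \<times> V" using Esym by (auto simp: D_def)
    then show ?thesis using finV finite_subset by blast
  qed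
  have swapD: "prod.swap a \<in> D" if "a \<in> D" for a
    using that Esym by (auto simp: D_def)
  define Fs where "Fs = fc ` D"
  have finFs: "finite Fs" using finD by (simp add: Fs_def)
  have finf: "finite f" if "f \<in> Fs" for f
    using that fc_sub finD by (auto simp: Fs_def intro: finite_subset)
  define dl :: "('v \<Rightarrow> real) \<Rightarrow> ('v \<times> 'v \<Rightarrow> real)" where
    "dl k = (\<lambda>x. if x \<in> D then k (snd x) - k (fst x) else 0)" for k
  define g0 where "g0 = (\<lambda>x. if x \<in> D then g x else 0)"
  define Anti where "Anti = {s :: 'v \<times> 'v \<Rightarrow> real. (\<forall>x. x \<notin> D \<longrightarrow> s x = 0) \<and> (\<forall>x\<in>D. s (prod.swap x) = - s x)}"
  define Phi :: "('v \<times> 'v \<Rightarrow> real) \<Rightarrow> ('v \<times> 'v) set \<Rightarrow> real" where "Phi s f = (\<Sum>b\<in>f. s b)" for s f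
  obtain a0 where a0: "a0 \<in> D" "fc a0 = Out" using OutF by auto
  define r where "r = fst a0"
  have rV: "r \<in> V" using a0 Esym by (auto simp: D_def r_def)
  define ind :: "'v \<Rightarrow> 'v \<Rightarrow> real" where "ind v = (\<lambda>w. if w = v then 1 else 0)" for v
  define B0 where "B0 = (\<lambda>v. dl (ind v)) ` (V - {r})"
  have A: "fv.independent B0 \<and> card B0 = card (V - {r})"
    unfolding B0_def
  proof (rule fv.indep_family)
    show "finite (V - {r})" using finV by simp
    fix c assume c0: "(\<Sum>i\<in>V - {r}. sc (c i) (dl (ind i))) = 0"
    define c' where "c' w = (if w \<in> V - {r} then c w else 0)" for w
    have eq: "(\<Sum>i\<in>V - {r}. sc (c i) (dl (ind i))) = dl c'"
    proof
      fix x
      have "(\<Sum>i\<in>V - {r}. sc (c i) (dl (ind i))) x = (\<Sum>i\<in>V - {r}. c i * dl (ind i) x)"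
        by (simp add: sum_fun_apply sc_def)
      also have "\<dots> = dl c' x"
      proof (cases "x \<in> D")
        case True
        have "(\<Sum>i\<in>V - {r}. c i * dl (ind i) x) =
              (\<Sum>i\<in>V - {r}. (if snd x = i then c i else 0) - (if fst x = i then c i else 0))"
          using True by (intro sum.cong) (auto simp: dl_def ind_def)
        also have "\<dots> = c' (snd x) - c' (fst x)"
          using finV by (simp add: sum_subtractf c'_def)
        finally show ?thesis using True by (simp add: dl_def)
      qed (simp add: dl_def)
      finally show "(\<Sum>i\<in>V - {r}. sc (c i) (dl (ind i))) x = dl c' x" .
    qed
    have dl0: "dl c' = 0" using c0 eq by simp
    have "c' v = c' r" if "E\<^sup>*\<^sup>* r v" for v
      using that
    proof induct
      case base then show ?case by simp
    next
      case (step y z)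
      have "(y, z) \<in> D" using step by (simp add: D_def)
      then have "dl c' (y, z) = 0" using dl0 by simp
      then show ?case using step \<open>(y, z) \<in> D\<close> by (simp add: dl_def)
    qed
    then have "c' v = 0" if "v \<in> V" for v
      using conn[OF rV that] by (simp add: c'_def)
    then show "\<forall>i\<in>V - {r}. c i = 0" by (metis DiffD1 c'_def)
  qed
  define Cob where "Cob = range dl"
  have subCob: "fv.subspace Cob"
  proof (rule fv.subspaceI)
    show "0 \<in> Cob" unfolding Cob_def by (rule image_eqI[of _ _ "\<lambda>_. 0"]) (auto simp: dl_def fun_eq_iff)
    fix x y assume "x \<in> Cob" "y \<in> Cob"
    then obtain k1 k2 where "x = dl k1" "y = dl k2" by (auto simp: Cob_def)
    then show "x + y \<in> Cob" unfolding Cob_def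
      by (intro image_eqI[of _ _ "\<lambda>v. k1 v + k2 v"]) (auto simp: dl_def fun_eq_iff)
  next
    fix c x assume "x \<in> Cob"
    then obtain k1 where "x = dl k1" by (auto simp: Cob_def)
    then show "sc c x \<in> Cob" unfolding Cob_def
      by (intro image_eqI[of _ _ "\<lambda>v. c * k1 v"]) (auto simp: dl_def fun_eq_iff sc_def algebra_simps)
  qed
  have spanB0: "fv.span B0 \<subseteq> Cob"
    by (rule fv.span_minimal[OF _ subCob]) (auto simp: B0_def Cob_def)
  have g0nc: "g0 \<notin> Cob"
  proof
    assume "g0 \<in> Cob"
    then obtain k where "g0 = dl k" by (auto simp: Cob_def)
    then have "\<forall>a\<in>D. g a = k (snd a) - k (fst a)"
      by (auto simp: g0_def dl_def fun_eq_iff split: if_splits)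
    then show False using nex by blast
  qed
  define S0 where "S0 = insert g0 B0"
  have S0: "fv.independent S0 \<and> finite S0 \<and> card S0 = card V"
  proof -
    have g0n: "g0 \<notin> fv.span B0" using spanB0 g0nc by blast
    then have "g0 \<notin> B0" using fv.span_base by blast
    have finB0: "finite B0" using finV by (simp add: B0_def)
    have "card S0 = card B0 + 1" using \<open>g0 \<notin> B0\<close> finB0 by (simp add: S0_def)
    also have "\<dots> = card V"
    proof -
      have "card V > 0" using rV finV card_gt_0_iff by blast
      then show ?thesis using A rV finV by (simp add: card_Diff_singleton)
    qed
    finally show ?thesis using A g0n finB0 by (simp add: S0_def fv.independent_insertI)
  qed
  have dlAnti: "dl k \<in> Anti" for k
    by (auto simp: Anti_def dl_def swapD)
  have g0Anti: "g0 \<in> Anti"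
    unfolding Anti_def g0_def using anti swapD by simp
  have S0Anti: "S0 \<subseteq> Anti"
    unfolding S0_def B0_def using g0Anti dlAnti by blast
  have S0Phi: "\<forall>s\<in>S0. \<forall>f\<in>Fs - {Out}. Phi s f = 0"
  proof (intro ballI)
    fix s f assume s: "s \<in> S0" and f: "f \<in> Fs - {Out}"
    then obtain a where a: "a \<in> D" "f = fc a" by (auto simp: Fs_def)
    have fD: "f \<subseteq> D" using a fc_sub by auto
    show "Phi s f = 0"
    proof (cases "s = g0")
      case True
      have "Phi s f = (\<Sum>b\<in>fc a. g b)" unfolding Phi_def True g0_def a(2)
        using fD a by (intro sum.cong) auto
      then show ?thesis using zero[OF a(1)] a f by auto
    next
      case False
      then obtain v where "s = dl (ind v)" using s by (auto simp: S0_def B0_def)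
      then have "Phi s f = (\<Sum>b\<in>fc a. ind v (snd b) - ind v (fst b))"
        unfolding Phi_def a(2) using fD a by (intro sum.cong) (auto simp: dl_def)
      then show ?thesis using closed[OF a(1)] by simp
    qed
  qed
  have Phi_add: "Phi (x + y) f = Phi x f + Phi y f" for x y f
    by (simp add: Phi_def sum.distrib)
  have Phi_sc: "Phi (sc c x) f = c * Phi x f" for c x f
    by (simp add: Phi_def sc_def sum_distrib_left)
  have Phi_0: "Phi 0 f = 0" for f by (simp add: Phi_def)
  have memf: "f = fc b" if bf: "b \<in> f" and fF: "f \<in> Fs" for b f
  proof -
    obtain c where "c \<in> D" "f = fc c" using fF unfolding Fs_def by blast
    then show ?thesis using fc_eq bf by metis
  qed
  have grow: "n < card Fs \<Longrightarrow> \<exists>R S. Out \<in> R \<and> R \<subseteq> Fs \<and> card R = n + 1 \<and> fv.independent S \<and>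
     finite S \<and> card S = card V + n \<and> S \<subseteq> Anti \<and> (\<forall>s\<in>S. \<forall>f\<in>Fs - R. Phi s f = 0)" for n
  proof (induct n)
    case 0
    show ?case
      by (intro exI[of _ "{Out}"] exI[of _ S0]) (use S0 S0Anti S0Phi OutF in \<open>auto simp: Fs_def\<close>)
  next
    case (Suc n)
    then obtain R S where RS: "Out \<in> R" "R \<subseteq> Fs" "card R = n + 1" "fv.independent S"
      "finite S" "card S = card V + n" "S \<subseteq> Anti" "\<forall>s\<in>S. \<forall>f\<in>Fs - R. Phi s f = 0"
      by auto
    have "R \<noteq> Fs" using RS(3) Suc.prems by auto
    then obtain a where a: "a \<in> D" "fc a \<notin> R" "fc (prod.swap a) \<in> R"
      using dual[of R] RS(1,2) by (auto simp: Fs_def)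
    have finR: "finite R" using RS(2) finFs finite_subset by blast
    have faF: "fc a \<in> Fs" using a by (simp add: Fs_def)
    have fsaF: "fc (prod.swap a) \<in> Fs" using a swapD by (simp add: Fs_def)
    define xa :: "'v \<times> 'v \<Rightarrow> real" where
      "xa = (\<lambda>x. (if x = a then 1 else 0) - (if x = prod.swap a then 1 else 0))"
    have xaAnti: "xa \<in> Anti"
    proof -
      have "\<forall>x. x \<notin> D \<longrightarrow> xa x = 0" using a swapD unfolding xa_def by auto
      moreover have "\<forall>x\<in>D. xa (prod.swap x) = - xa x"
      proof
        fix x :: "'v \<times> 'v"
        have e1: "(prod.swap x = a) = (x = prod.swap a)" by (metis swap_swap)
        have e2: "(prod.swap x = prod.swap a) = (x = a)" by (metis swap_swap)
        show "xa (prod.swap x) = - xa x" unfolding xa_def e1 e2 by simp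
      qed
      ultimately show ?thesis unfolding Anti_def by simp
    qed
    have PhiX: "Phi xa f = (if a \<in> f then 1 else 0) - (if prod.swap a \<in> f then 1 else 0)"
      if "f \<in> Fs" for f
      using finf[OF that] by (simp add: Phi_def xa_def sum_subtractf)
    have nsa: "prod.swap a \<notin> fc a"
    proof
      assume "prod.swap a \<in> fc a"
      then have "fc a = fc (prod.swap a)" using memf faF by blast
      then show False using a by simp
    qed
    have Z: "fv.span S \<subseteq> {y. Phi y (fc a) = 0}"
    proof (rule fv.span_minimal)
      show "S \<subseteq> {y. Phi y (fc a) = 0}" using RS(8) faF a(2) by auto
      show "fv.subspace {y. Phi y (fc a) = 0}"
        by (rule fv.subspaceI) (auto simp: Phi_add Phi_sc Phi_0)
    qed
    have "Phi xa (fc a) = 1" using PhiX[OF faF] nsa fc_sub[OF a(1)] by simp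
    then have xns: "xa \<notin> fv.span S" using Z by auto
    then have xnS: "xa \<notin> S" using fv.span_base by blast
    show ?case
    proof (intro exI[of _ "insert (fc a) R"] exI[of _ "insert xa S"] conjI)
      show "Out \<in> insert (fc a) R" using RS(1) by simp
      show "insert (fc a) R \<subseteq> Fs" using RS(2) faF by simp
      show "card (insert (fc a) R) = Suc n + 1" using finR a(2) RS(3) by simp
      show "fv.independent (insert xa S)" using xns RS(4) by (rule fv.independent_insertI)
      show "finite (insert xa S)" using RS(5) by simp
      show "card (insert xa S) = card V + Suc n" using RS(5,6) xnS by simp
      show "insert xa S \<subseteq> Anti" using RS(7) xaAnti by simp
      show "\<forall>s\<in>insert xa S. \<forall>f\<in>Fs - insert (fc a) R. Phi s f = 0"
      proof (intro ballI)
        fix s f assume s: "s \<in> insert xa S" and f: "f \<in> Fs - insert (fc a) R"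
        show "Phi s f = 0"
        proof (cases "s = xa")
          case True
          have "a \<notin> f" using memf[of a f] f by auto
          moreover have "prod.swap a \<notin> f" using memf[of "prod.swap a" f] f a(3) by auto
          ultimately show ?thesis using True PhiX f by simp
        next
          case False
          then show ?thesis using s f RS(8) by auto
        qed
      qed
    qed
  qed
  have cF: "card Fs \<ge> 1" using OutF finFs by (metis Fs_def One_nat_def Suc_leI card_gt_0_iff empty_iff)
  obtain S where S: "fv.independent S" "card S = card V + (card Fs - 1)" "S \<subseteq> Anti"
    using grow[of "card Fs - 1"] cF by auto
  obtain \<iota> :: "'v \<Rightarrow> nat" where iota: "inj_on \<iota> V"
    using finite_imp_inj_to_nat_seg[OF finV] by blast
  define Dp where "Dp = {x\<in>D. \<iota> (fst x) < \<iota> (snd x)}"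
  have finDp: "finite Dp" using finD by (simp add: Dp_def)
  have DDp: "D - Dp = prod.swap ` Dp"
  proof
    show "D - Dp \<subseteq> prod.swap ` Dp"
    proof
      fix x assume x: "x \<in> D - Dp"
      obtain u v where uv: "x = (u, v)" by (cases x)
      have "E u v" using x uv by (simp add: D_def)
      then have "u \<in> V" "v \<in> V" "u \<noteq> v" "E v u" using Esym by auto
      then have "\<iota> u \<noteq> \<iota> v" using iota by (meson inj_on_eq_iff)
      then have "(v, u) \<in> Dp" using x uv \<open>E v u\<close> by (auto simp: Dp_def D_def)
      then show "x \<in> prod.swap ` Dp" using uv by (auto intro: image_eqI[of _ _ "(v, u)"])
    qed
    show "prod.swap ` Dp \<subseteq> D - Dp"
      using swapD by (auto simp: Dp_def)
  qed
  have cD: "card D = 2 * card Dp"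
  proof -
    have DpD: "Dp \<subseteq> D" by (auto simp: Dp_def)
    have "card (D - Dp) = card D - card Dp" using card_Diff_subset[OF finDp DpD] .
    moreover have "card Dp \<le> card D" using card_mono[OF finD DpD] .
    ultimately have "card D = card Dp + card (D - Dp)" by simp
    also have "card (D - Dp) = card Dp" unfolding DDp
      by (rule card_image) (rule inj_swap)
    finally show ?thesis by simp
  qed
  define xx :: "'v \<times> 'v \<Rightarrow> 'v \<times> 'v \<Rightarrow> real" where
    "xx b = (\<lambda>x. (if x = b then 1 else 0) - (if x = prod.swap b then 1 else 0))" for b
  define W where "W = xx ` Dp"
  have AntiW: "Anti \<subseteq> fv.span W"
  proof
    fix s assume s: "s \<in> Anti"
    have "s = (\<Sum>b\<in>Dp. sc (s b) (xx b))"
    proof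
      fix x
      have "(\<Sum>b\<in>Dp. sc (s b) (xx b)) x = (\<Sum>b\<in>Dp. (if b = x then s x else 0) - (if b = prod.swap x then s (prod.swap x) else 0))"
        unfolding sum_fun_apply sc_def xx_def
        apply (intro sum.cong refl)
        subgoal for b using swap_eq_iff[of x b] by auto
        done
      also have "\<dots> = (if x \<in> Dp then s x else 0) - (if prod.swap x \<in> Dp then s (prod.swap x) else 0)"
        using finDp by (simp add: sum_subtractf)
      also have "\<dots> = s x"
      proof (cases "x \<in> D")
        case True
        show ?thesis
        proof (cases "x \<in> Dp")
          case True
          then have "prod.swap x \<notin> Dp" by (simp add: Dp_def)
          then show ?thesis using True by simp
        next
          case False
          then have "x \<in> prod.swap ` Dp" using DDp \<open>x \<in> D\<close> by blast
          then obtain y where "y \<in> Dp" "x = prod.swap y" by blast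
          then have "prod.swap x \<in> Dp" by simp
          then show ?thesis using False s \<open>x \<in> D\<close> by (simp add: Anti_def)
        qed
      next
        case False
        then have "x \<notin> Dp" "prod.swap x \<notin> Dp" using swapD[of "prod.swap x"] by (auto simp: Dp_def)
        moreover have "s x = 0" using False s unfolding Anti_def by blast
        ultimately show ?thesis by simp
      qed
      finally show "s x = (\<Sum>b\<in>Dp. sc (s b) (xx b)) x" by simp
    qed
    also have "\<dots> \<in> fv.span W"
      by (intro fv.span_sum fv.span_scale fv.span_base) (auto simp: W_def)
    finally show "s \<in> fv.span W" .
  qed
  have "card S \<le> card W"
    using fv.independent_span_bound[of W S] S AntiW finDp by (auto simp: W_def)
  also have "card W \<le> card Dp" unfolding W_def using finDp by (rule card_image_le)
  finally have "card S \<le> card Dp" .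
  moreover have "card S = card Dp + 1"
    using S(2) euler cD cF by (simp add: Fs_def)
  ultimately show False by simp
qed



definition orb :: "('a \<Rightarrow> 'a) \<Rightarrow> 'a \<Rightarrow> 'a set" where
  "orb p a = {(p ^^ k) a | k. True}"

lemma face_orbit_orb: "face_orbit \<sigma> d = orb (face_step \<sigma>) d"
  by (simp add: face_orbit_def orb_def)

locale endo =
  fixes p :: "'a \<Rightarrow> 'a" and A :: "'a set"
  assumes finA: "finite A" and pA: "\<And>a. a \<in> A \<Longrightarrow> p a \<in> A" and injp: "inj_on p A"
begin

lemma pw_in: "a \<in> A \<Longrightarrow> (p ^^ k) a \<in> A"
  by (induct k) (auto intro: pA)

lemma pw_cancel: "a \<in> A \<Longrightarrow> b \<in> A \<Longrightarrow> (p ^^ i) a = (p ^^ i) b \<Longrightarrow> a = b"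
proof (induct i arbitrary: a b)
  case 0 then show ?case by simp
next
  case (Suc i)
  have "(p ^^ i) (p a) = (p ^^ i) (p b)" using Suc.prems(3) unfolding funpow_Suc_right comp_apply .
  then have "p a = p b" by (rule Suc.hyps[OF pA[OF Suc.prems(1)] pA[OF Suc.prems(2)]])
  then show ?case by (rule inj_onD[OF injp _ Suc.prems(1) Suc.prems(2)])
qed

lemma pw_period: assumes a: "a \<in> A" shows "\<exists>n>0. (p ^^ n) a = a"
proof -
  let ?f = "\<lambda>k. (p ^^ k) a"
  have sub: "?f ` {0..card A} \<subseteq> A" using pw_in a by auto
  have c1: "card (?f ` {0..card A}) \<le> card A" by (rule card_mono[OF finA sub])
  have "\<not> inj_on ?f {0..card A}"
  proof
    assume "inj_on ?f {0..card A}"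
    then have "card (?f ` {0..card A}) = card {0..card A}" by (rule card_image)
    then show False using c1 by simp
  qed
  then obtain i j where ij: "i \<in> {0..card A}" "j \<in> {0..card A}" "i \<noteq> j" "?f i = ?f j"
    unfolding inj_on_def by blast
  have "\<exists>i j. i < j \<and> ?f i = ?f j"
  proof (cases "i < j")
    case True then show ?thesis using ij(4) by blast
  next
    case False then have "j < i" using ij(3) by simp
    then show ?thesis using ij(4) by (intro exI[of _ j] exI[of _ i]) simp
  qed
  then obtain i j where ij: "i < j" "?f i = ?f j" by blast
  have "(p ^^ j) a = (p ^^ ((j - i) + i)) a" using ij(1) by simp
  also have "\<dots> = (p ^^ i) ((p ^^ (j - i)) a)"
    by (simp only: funpow_add comp_apply add.commute)
  finally have "(p ^^ j) a = (p ^^ i) ((p ^^ (j - i)) a)" .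
  then have "(p ^^ i) a = (p ^^ i) ((p ^^ (j - i)) a)" by (rule trans[OF ij(2)])
  then have "a = (p ^^ (j - i)) a" by (rule pw_cancel[OF a pw_in[OF a]])
  then show ?thesis using ij(1) by (intro exI[of _ "j - i"]) auto
qed

lemma pw_mult: "(p ^^ n) a = a \<Longrightarrow> (p ^^ (m * n)) a = a"
proof (induct m)
  case 0 then show ?case by simp
next
  case (Suc m)
  have "(p ^^ (Suc m * n)) a = (p ^^ n) ((p ^^ (m * n)) a)"
    by (simp add: funpow_add)
  then show ?case using Suc by simp
qed

lemma orb_self: "a \<in> orb p a"
  unfolding orb_def by (auto intro: exI[of _ 0])

lemma orb_sub: "a \<in> A \<Longrightarrow> orb p a \<subseteq> A"
  unfolding orb_def using pw_in by auto

lemma orb_step: assumes "b \<in> orb p a" shows "p b \<in> orb p a"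
proof -
  obtain k where "b = (p ^^ k) a" using assms by (auto simp: orb_def)
  then have "p b = (p ^^ Suc k) a" by simp
  then show ?thesis unfolding orb_def by blast
qed

lemma orb_eq: assumes a: "a \<in> A" and b: "b \<in> orb p a" shows "orb p b = orb p a"
proof -
  obtain k where k: "b = (p ^^ k) a" using b by (auto simp: orb_def)
  obtain n where n: "n > 0" "(p ^^ n) a = a" using pw_period[OF a] by blast
  show ?thesis
  proof
    show "orb p b \<subseteq> orb p a"
    proof
      fix c assume "c \<in> orb p b"
      then obtain j where j: "c = (p ^^ j) b" by (auto simp: orb_def)
      then have "c = (p ^^ (j + k)) a" unfolding k funpow_add comp_apply by simp
      then show "c \<in> orb p a" unfolding orb_def by blast
    qed
  next
    show "orb p a \<subseteq> orb p b"
    proof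
      fix c assume "c \<in> orb p a"
      then obtain j where j: "c = (p ^^ j) a" by (auto simp: orb_def)
      have kn: "k \<le> k * n" using n by simp
      have "c = (p ^^ j) ((p ^^ (k * n)) a)" using j pw_mult[OF n(2)] by simp
      also have "\<dots> = (p ^^ (j + k * n)) a" by (simp add: funpow_add)
      also have "\<dots> = (p ^^ (j + k * n - k)) ((p ^^ k) a)"
      proof -
        have "j + k * n = (j + k * n - k) + k" using kn by linarith
        then have "(p ^^ (j + k * n)) a = (p ^^ ((j + k * n - k) + k)) a" by simp
        also have "\<dots> = (p ^^ (j + k * n - k)) ((p ^^ k) a)" by (simp only: funpow_add comp_apply)
        finally show ?thesis .
      qed
      finally show "c \<in> orb p b" unfolding k orb_def by blast
    qed
  qed
qed

lemma orb_period_sub: assumes "(p ^^ n) a = a" "n > 0" shows "orb p a \<subseteq> (\<lambda>k. (p ^^ k) a) ` {..<n}"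
proof
  fix c assume "c \<in> orb p a"
  then obtain k where k: "c = (p ^^ k) a" by (auto simp: orb_def)
  have "k = k mod n + (k div n) * n" by simp
  then have "(p ^^ k) a = (p ^^ (k mod n + (k div n) * n)) a" by simp
  also have "\<dots> = (p ^^ (k mod n)) ((p ^^ ((k div n) * n)) a)" by (simp only: funpow_add comp_apply)
  finally have "(p ^^ k) a = (p ^^ (k mod n)) ((p ^^ ((k div n) * n)) a)" .
  also have "\<dots> = (p ^^ (k mod n)) a" using pw_mult[OF assms(1)] by simp
  finally show "c \<in> (\<lambda>k. (p ^^ k) a) ` {..<n}" using k assms(2) by auto
qed

lemma orb_card_le: assumes "(p ^^ n) a = a" "n > 0" shows "card (orb p a) \<le> n"
proof -
  have "card (orb p a) \<le> card ((\<lambda>k. (p ^^ k) a) ` {..<n})"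
    using orb_period_sub[OF assms] by (intro card_mono) auto
  also have "\<dots> \<le> n" using card_image_le[of "{..<n}"] by simp
  finally show ?thesis .
qed

lemma orb_tri: assumes a: "a \<in> A" and c3: "card (orb p a) = 3"
  shows "orb p a = {a, p a, p (p a)} \<and> p (p (p a)) = a \<and> card {a, p a, p (p a)} = 3"
proof -
  have in1: "p a \<in> A" "p (p a) \<in> A" "p (p (p a)) \<in> A" using a pA by auto
  have n1: "p a \<noteq> a"
  proof
    assume "p a = a" then have "card (orb p a) \<le> 1" using orb_card_le[of 1 a] by simp
    then show False using c3 by simp
  qed
  have n2: "p (p a) \<noteq> a"
  proof
    assume "p (p a) = a" then have "card (orb p a) \<le> 2" using orb_card_le[of 2 a]
      by (simp add: numeral_2_eq_2)
    then show False using c3 by simp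
  qed
  have n12: "p a \<noteq> p (p a)" using n1 inj_onD[OF injp _ a in1(1)] by metis
  have p3: "p (p (p a)) = a"
  proof (rule ccontr)
    assume n3: "p (p (p a)) \<noteq> a"
    have n13: "p a \<noteq> p (p (p a))" using n2 inj_onD[OF injp _ a in1(2)] by metis
    have n23: "p (p a) \<noteq> p (p (p a))" using n12 inj_onD[OF injp _ in1(1) in1(2)] by metis
    have sub: "{a, p a, p (p a), p (p (p a))} \<subseteq> orb p a"
      using orb_self orb_step by blast
    have fin: "finite (orb p a)" using orb_sub[OF a] finA finite_subset by blast
    have "card {a, p a, p (p a), p (p (p a))} = 4" using n1 n2 n3 n12 n13 n23 by simp
    then have "4 \<le> card (orb p a)" using card_mono[OF fin sub] by simp
    then show False using c3 by simp
  qed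
  have "orb p a \<subseteq> (\<lambda>k. (p ^^ k) a) ` {..<3}" using orb_period_sub[of 3 a] p3
    by (simp add: numeral_3_eq_3)
  also have "(\<lambda>k. (p ^^ k) a) ` {..<3} = {a, p a, p (p a)}"
    by (auto simp: numeral_3_eq_3 lessThan_Suc)
  finally have "orb p a \<subseteq> {a, p a, p (p a)}" .
  moreover have "{a, p a, p (p a)} \<subseteq> orb p a" using orb_self orb_step by blast
  ultimately have "orb p a = {a, p a, p (p a)}" by blast
  then show ?thesis using p3 c3 by simp
qed

lemma orb_closed: assumes a: "a \<in> A" shows "p ` orb p a = orb p a" "inj_on p (orb p a)"
  "finite (orb p a)"
proof -
  show "inj_on p (orb p a)" using injp orb_sub[OF a] inj_on_subset by blast
  show fin: "finite (orb p a)" using orb_sub[OF a] finA finite_subset by blast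
  show "p ` orb p a = orb p a"
    using endo_inj_surj[OF fin] orb_step \<open>inj_on p (orb p a)\<close> by blast
qed

end



lemma ex3: "(x::3) = 0 \<or> x = 1 \<or> x = 2"
proof (induct x)
  case (of_int z)
  then have "z = 0 \<or> z = 1 \<or> z = 2" by simp arith
  then show ?case by auto
qed
lemma ex2: "(x::2) = 0 \<or> x = 1"
proof (induct x)
  case (of_int z)
  then have "z = 0 \<or> z = 1" by simp arith
  then show ?case by auto
qed

definition sgn3 :: "3 \<Rightarrow> int" where "sgn3 d = (if d = 1 then 1 else -1)"
definition Dst :: "3 \<Rightarrow> 2 \<Rightarrow> 2 \<Rightarrow> int \<times> int" where
 "Dst d c1 c2 = (if c1 = 1 \<and> c2 = 0 then (sgn3 d, 0) else if c1 = 0 \<and> c2 = 1 then (0, sgn3 d)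
    else (- sgn3 d, - sgn3 d))"

lemma Dst_hue: "d \<noteq> 0 \<Longrightarrow> (c1, c2) \<noteq> (0,0) \<Longrightarrow>
  (of_int (fst (Dst d c1 c2)) + of_int (snd (Dst d c1 c2)) :: 3) = d"
  using ex3[of d] ex2[of c1] ex2[of c2] by (auto simp: Dst_def sgn3_def)
lemma Dst_c1: "d \<noteq> 0 \<Longrightarrow> (c1, c2) \<noteq> (0,0) \<Longrightarrow> (of_int (fst (Dst d c1 c2)) :: 2) = c1"
  using ex3[of d] ex2[of c1] ex2[of c2] by (auto simp: Dst_def sgn3_def)
lemma Dst_c2: "d \<noteq> 0 \<Longrightarrow> (c1, c2) \<noteq> (0,0) \<Longrightarrow> (of_int (snd (Dst d c1 c2)) :: 2) = c2"
  using ex3[of d] ex2[of c1] ex2[of c2] by (auto simp: Dst_def sgn3_def)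
lemma Dst_anti: "d \<noteq> 0 \<Longrightarrow> Dst (-d) (-c1) (-c2) = (- fst (Dst d c1 c2), - snd (Dst d c1 c2))"
  using ex3[of d] ex2[of c1] ex2[of c2] by (auto simp: Dst_def sgn3_def)
lemma Dst_adj: "d \<noteq> 0 \<Longrightarrow> (c1, c2) \<noteq> (0,0) \<Longrightarrow>
   Dst d c1 c2 \<in> {(1,0), (-1,0), (0,1), (0,-1), (1,1), (-1,-1)}"
  using ex3[of d] ex2[of c1] ex2[of c2] by (auto simp: Dst_def sgn3_def)
lemma neg2: "-(x::2) = x" using ex2[of x] by auto
lemma Dst_tri: "d1 \<noteq> 0 \<Longrightarrow> d2 \<noteq> 0 \<Longrightarrow> d1 + d2 \<noteq> 0 \<Longrightarrow> (e1, e2) \<noteq> (0,0) \<Longrightarrow> (f1, f2) \<noteq> (0,0)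
  \<Longrightarrow> (e1 + f1, e2 + f2) \<noteq> (0,0) \<Longrightarrow>
   fst (Dst d1 e1 e2) + fst (Dst d2 f1 f2) + fst (Dst (-(d1+d2)) (-(e1+f1)) (-(e2+f2))) = 0 \<and>
   snd (Dst d1 e1 e2) + snd (Dst d2 f1 f2) + snd (Dst (-(d1+d2)) (-(e1+f1)) (-(e2+f2))) = 0"
proof -
  assume a: "d1 \<noteq> 0" "d2 \<noteq> 0" "d1 + d2 \<noteq> 0" "(e1, e2) \<noteq> (0,0)" "(f1, f2) \<noteq> (0,0)"
    "(e1 + f1, e2 + f2) \<noteq> (0,0)"
  have d2: "d2 = d1" using a(1-3) ex3[of d1] ex3[of d2] by auto
  have d3: "-(d1 + d2) = d1" using d2 ex3[of d1] by auto
  have "Dst (-(d1+d2)) (-(e1+f1)) (-(e2+f2)) = Dst d1 (e1+f1) (e2+f2)" by (simp only: d3 neg2)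
  moreover have "fst (Dst d1 e1 e2) + fst (Dst d1 f1 f2) + fst (Dst d1 (e1+f1) (e2+f2)) = 0 \<and>
   snd (Dst d1 e1 e2) + snd (Dst d1 f1 f2) + snd (Dst d1 (e1+f1) (e2+f2)) = 0"
    using a(4-6) ex2[of e1] ex2[of e2] ex2[of f1] ex2[of f2] by (auto simp: Dst_def)
  ultimately show ?thesis using d2 by simp
qed
lemma pt_exists: "\<exists>p. T_hue p = h \<and> T_color p = (c1, c2)"
proof -
  have "\<exists>a\<in>{0,1,2,3,4,5::int}. \<exists>b\<in>{0,1::int}. (of_int (a + b) :: 3) = h \<and> (of_int a :: 2) = c1 \<and> (of_int b :: 2) = c2"
    using ex3[of h] ex2[of c1] ex2[of c2] by (elim disjE) simp_all
  then obtain a b where "(of_int (a + b) :: 3) = h" "(of_int a :: 2) = c1" "(of_int b :: 2) = c2"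
    by blast
  then show ?thesis unfolding T_hue_def T_color_def by (intro exI[of _ "(a,b)"]) simp
qed



lemma darts_endo:
  assumes sg: "simple_graph V E" and rs: "rotation_system V E \<sigma>"
  shows "endo (face_step \<sigma>) (darts E)"
proof
  have "darts E \<subseteq> V \<times> V" using sg by (auto simp: simple_graph_def darts_def)
  then show "finite (darts E)" using sg finite_subset by (auto simp: simple_graph_def)
next
  fix a assume a: "a \<in> darts E"
  obtain u v where uv: "a = (u, v)" by (cases a)
  have "E u v" using a uv by (simp add: darts_def)
  then have "v \<in> V" "E v u" using sg by (auto simp: simple_graph_def)
  then have "bij_betw (\<sigma> v) (nbrs E v) (nbrs E v)" "u \<in> nbrs E v"
    using rs by (auto simp: rotation_system_def nbrs_def)
  then have "\<sigma> v u \<in> nbrs E v" using bij_betwE by blast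
  then show "face_step \<sigma> a \<in> darts E" using uv by (simp add: face_step_def darts_def nbrs_def)
next
  show "inj_on (face_step \<sigma>) (darts E)"
  proof (rule inj_onI)
    fix a b assume a: "a \<in> darts E" and b: "b \<in> darts E" and eq: "face_step \<sigma> a = face_step \<sigma> b"
    obtain u v where uv: "a = (u, v)" by (cases a)
    obtain u' v' where uv': "b = (u', v')" by (cases b)
    have vv: "v' = v" and ss: "\<sigma> v u = \<sigma> v u'" using eq uv uv' by (auto simp: face_step_def)
    have "E u v" "E u' v" using a b uv uv' vv by (auto simp: darts_def)
    then have "v \<in> V" "u \<in> nbrs E v" "u' \<in> nbrs E v" using sg by (auto simp: simple_graph_def nbrs_def)
    then have "inj_on (\<sigma> v) (nbrs E v)" using rs by (auto simp: rotation_system_def bij_betw_def)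
    then have "u = u'" using ss \<open>u \<in> nbrs E v\<close> \<open>u' \<in> nbrs E v\<close> by (meson inj_onD)
    then show "a = b" using uv uv' vv by simp
  qed
qed

lemma int_pot:
  fixes h :: "'v \<Rightarrow> real" and c :: "'v \<times> 'v \<Rightarrow> int"
  assumes conn: "\<And>u v. u \<in> V \<Longrightarrow> v \<in> V \<Longrightarrow> E\<^sup>*\<^sup>* u v"
    and Esym: "\<And>u v. E u v \<Longrightarrow> u \<in> V \<and> v \<in> V"
    and rV: "r \<in> V"
    and hc: "\<And>u v. E u v \<Longrightarrow> real_of_int (c (u, v)) = h v - h u"
  shows "\<exists>k. k r = 0 \<and> (\<forall>u v. E u v \<longrightarrow> c (u, v) = k v - k u)"
proof -
  have int: "\<exists>n. h v - h r = real_of_int n" if "E\<^sup>*\<^sup>* r v" for v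
    using that
  proof induct
    case base then show ?case by (intro exI[of _ 0]) simp
  next
    case (step y z)
    then obtain n where "h y - h r = real_of_int n" by blast
    then have "h z - h r = real_of_int (n + c (y, z))" using hc[OF step(2)] by simp
    then show ?case by blast
  qed
  define k where "k v = \<lfloor>h v - h r\<rfloor>" for v
  have kv: "h v - h r = real_of_int (k v)" if vV: "v \<in> V" for v
  proof -
    obtain n where "h v - h r = real_of_int n" using int conn[OF rV vV] by blast
    then show ?thesis by (simp add: k_def)
  qed
  show ?thesis
  proof (intro exI[of _ k] conjI allI impI)
    show "k r = 0" by (simp add: k_def)
    fix u v assume "E u v"
    then have "u \<in> V" "v \<in> V" using Esym by auto
    then have "real_of_int (c (u, v)) = real_of_int (k v - k u)"
      using hc[OF \<open>E u v\<close>] kv[of u] kv[of v] by simp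
    then show "c (u, v) = k v - k u" by (simp only: of_int_eq_iff)
  qed
qed

lemma proper_nz:
  assumes pp: "proper_on V E (\<psi> :: 'v \<Rightarrow> 3)" and pt: "proper_on V E (\<theta> :: 'v \<Rightarrow> 2 \<times> 2)"
    and uv: "E u v" "u \<in> V" "v \<in> V"
  shows "\<psi> v - \<psi> u \<noteq> 0" "(fst (\<theta> v) - fst (\<theta> u), snd (\<theta> v) - snd (\<theta> u)) \<noteq> (0, 0)"
proof -
  have "\<psi> u \<noteq> \<psi> v" using pp uv by (auto simp: proper_on_def)
  then show "\<psi> v - \<psi> u \<noteq> 0" by (simp add: right_minus_eq)
  have "\<theta> u \<noteq> \<theta> v" using pt uv by (auto simp: proper_on_def)
  then show "(fst (\<theta> v) - fst (\<theta> u), snd (\<theta> v) - snd (\<theta> u)) \<noteq> (0, 0)"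
    by (auto simp: prod_eq_iff)
qed




theorem corollary8:
  fixes V :: "'v set" and E :: "'v \<Rightarrow> 'v \<Rightarrow> bool" and \<sigma> :: "'v \<Rightarrow> 'v \<Rightarrow> 'v"
    and Out :: "('v \<times> 'v) set" and \<psi> :: "'v \<Rightarrow> 3" and \<phi> :: "'v \<Rightarrow> 2 \<times> 2"
  assumes "patch V E \<sigma> Out"
    and "proper_on V E \<psi>"
    and "proper_on (bd_verts V E Out) (bd_adj Out) \<phi>"
    and "\<exists>\<theta> :: 'v \<Rightarrow> 2 \<times> 2. proper_on V E \<theta> \<and> (\<forall>v\<in>bd_verts V E Out. \<theta> v = \<phi> v)"
  shows "viable (bd_verts V E Out) (bd_adj Out) \<psi> \<phi>"
proof -
  obtain \<theta> :: "'v \<Rightarrow> 2 \<times> 2" where th: "proper_on V E \<theta>" "\<forall>v\<in>bd_verts V E Out. \<theta> v = \<phi> v"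
    using assms(4) by blast
  have sg: "simple_graph V E" and cg: "connected_graph V E" and rs: "rotation_system V E \<sigma>"
    and eul: "int (card V) - int (card (darts E) div 2) + int (num_faces E \<sigma>) = 2"
    and outer: "if darts E = {} then Out = {} else Out \<in> faces E \<sigma>"
    and tri: "\<forall>f\<in>faces E \<sigma>. f \<noteq> Out \<longrightarrow> card f = 3"
    using assms(1) by (auto simp: patch_def plane_graph_def)
  have Esym: "\<And>u v. E u v \<Longrightarrow> u \<in> V \<and> v \<in> V \<and> u \<noteq> v \<and> E v u"
    using sg by (auto simp: simple_graph_def)
  have finV: "finite V" using sg by (simp add: simple_graph_def)
  have EV1: "\<And>u v. E u v \<Longrightarrow> u \<in> V" and EV2: "\<And>u v. E u v \<Longrightarrow> v \<in> V"
    and Esw: "\<And>u v. E u v \<Longrightarrow> E v u" using Esym by blast+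
  have conn: "\<And>u v. u \<in> V \<Longrightarrow> v \<in> V \<Longrightarrow> E\<^sup>*\<^sup>* u v" using cg by (simp add: connected_graph_def)
  show ?thesis
  proof (cases "darts E = {}")
    case True
    then have bdV: "bd_verts V E Out = V" and O0: "Out = {}" using outer by (auto simp: bd_verts_def)
    define f where "f v = (SOME p. T_hue p = \<psi> v \<and> T_color p = \<phi> v)" for v
    have "T_hue (f v) = \<psi> v \<and> T_color (f v) = \<phi> v" for v
    proof -
      obtain p where "T_hue p = \<psi> v \<and> T_color p = (fst (\<phi> v), snd (\<phi> v))" using pt_exists by blast
      then have "\<exists>p. T_hue p = \<psi> v \<and> T_color p = \<phi> v" by (intro exI[of _ p]) simp
      then show ?thesis unfolding f_def by (rule someI_ex)
    qed
    then show ?thesis unfolding viable_def dappled_hom_T_def bdV O0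
      by (intro exI[of _ f]) (auto simp: bd_adj_def)
  next
    case False
    define D where "D = darts E"
    define st where "st = face_step \<sigma>"
    interpret en: endo st D unfolding st_def D_def by (rule darts_endo[OF sg rs])
    have fo: "face_orbit \<sigma> a = orb st a" for a by (simp add: face_orbit_orb st_def)
    have OutF: "Out \<in> face_orbit \<sigma> ` D" using outer False by (simp add: faces_def D_def)
    have DE: "a \<in> D \<longleftrightarrow> E (fst a) (snd a)" for a by (cases a) (simp add: D_def darts_def)
    define d where "d x = Dst (\<psi> (snd x) - \<psi> (fst x)) (fst (\<theta> (snd x)) - fst (\<theta> (fst x)))
        (snd (\<theta> (snd x)) - snd (\<theta> (fst x)))" for x
    have nz: "\<psi> (snd a) - \<psi> (fst a) \<noteq> 0"
      "(fst (\<theta> (snd a)) - fst (\<theta> (fst a)), snd (\<theta> (snd a)) - snd (\<theta> (fst a))) \<noteq> (0, 0)"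
      if "a \<in> D" for a
    proof -
      have "E (fst a) (snd a)" using that DE by blast
      then show "\<psi> (snd a) - \<psi> (fst a) \<noteq> 0"
        "(fst (\<theta> (snd a)) - fst (\<theta> (fst a)), snd (\<theta> (snd a)) - snd (\<theta> (fst a))) \<noteq> (0, 0)"
        using proper_nz[OF assms(2) th(1), of "fst a" "snd a"] EV1 EV2 by blast+
    qed
    have danti: "d (prod.swap a) = (- fst (d a), - snd (d a))" if "a \<in> D" for a
    proof -
      have "d (prod.swap a) = Dst (- (\<psi> (snd a) - \<psi> (fst a))) (- (fst (\<theta> (snd a)) - fst (\<theta> (fst a))))
        (- (snd (\<theta> (snd a)) - snd (\<theta> (fst a))))" by (simp add: d_def)
      also have "\<dots> = (- fst (d a), - snd (d a))" unfolding d_def by (rule Dst_anti[OF nz(1)[OF that]])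
      finally show ?thesis .
    qed
    have dtri: "fst (d (x, y)) + fst (d (y, z)) + fst (d (z, x)) = 0 \<and>
                snd (d (x, y)) + snd (d (y, z)) + snd (d (z, x)) = 0"
      if "E x y" "E y z" "E z x" for x y z
    proof -
      have i: "(x, y) \<in> D" "(y, z) \<in> D" "(x, z) \<in> D" using that Esw[OF that(3)] DE by auto
      have e1: "\<psi> x - \<psi> z = - ((\<psi> y - \<psi> x) + (\<psi> z - \<psi> y))" by (simp add: algebra_simps)
      have e2: "fst (\<theta> x) - fst (\<theta> z) = - ((fst (\<theta> y) - fst (\<theta> x)) + (fst (\<theta> z) - fst (\<theta> y)))"
        by (simp add: algebra_simps)
      have e3: "snd (\<theta> x) - snd (\<theta> z) = - ((snd (\<theta> y) - snd (\<theta> x)) + (snd (\<theta> z) - snd (\<theta> y)))"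
        by (simp add: algebra_simps)
      have s1: "(\<psi> y - \<psi> x) + (\<psi> z - \<psi> y) = \<psi> z - \<psi> x" by (simp add: algebra_simps)
      have s2: "(fst (\<theta> y) - fst (\<theta> x)) + (fst (\<theta> z) - fst (\<theta> y)) = fst (\<theta> z) - fst (\<theta> x)"
        by (simp add: algebra_simps)
      have s3: "(snd (\<theta> y) - snd (\<theta> x)) + (snd (\<theta> z) - snd (\<theta> y)) = snd (\<theta> z) - snd (\<theta> x)"
        by (simp add: algebra_simps)
      show ?thesis unfolding d_def fst_conv snd_conv e1 e2 e3
        by (rule Dst_tri) (use nz[OF i(1)] nz[OF i(2)] nz[OF i(3)] in \<open>simp_all add: s1 s2 s3\<close>)
    qed
    have fc_sub: "a \<in> face_orbit \<sigma> a \<and> face_orbit \<sigma> a \<subseteq> D" if "a \<in> D" for a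
      unfolding fo using en.orb_self en.orb_sub[OF that] by blast
    have fc_eq: "face_orbit \<sigma> b = face_orbit \<sigma> a" if "a \<in> D" "b \<in> face_orbit \<sigma> a" for a b
      using en.orb_eq[OF that(1)] that(2) unfolding fo by blast
    have closed: "(\<Sum>b\<in>face_orbit \<sigma> a. k (snd b) - k (fst b)) = (0::real)" if aD: "a \<in> D" for a k
    proof -
      let ?O = "orb st a"
      have "(\<Sum>b\<in>?O. k (snd b)) = (\<Sum>b\<in>?O. k (fst (st b)))"
        by (simp add: st_def face_step_def)
      also have "\<dots> = (\<Sum>b\<in>st ` ?O. k (fst b))"
        using en.orb_closed(2)[OF aD] by (simp add: sum.reindex)
      also have "\<dots> = (\<Sum>b\<in>?O. k (fst b))" using en.orb_closed(1)[OF aD] by simp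
      finally show ?thesis unfolding fo by (simp add: sum_subtractf)
    qed
    have dual: "\<exists>a\<in>D. face_orbit \<sigma> a \<notin> R \<and> face_orbit \<sigma> (prod.swap a) \<in> R"
      if R: "Out \<in> R" "R \<subseteq> face_orbit \<sigma> ` D" "R \<noteq> face_orbit \<sigma> ` D" for R
    proof (rule ccontr)
      assume "\<not> ?thesis"
      then have H: "face_orbit \<sigma> a \<in> R" if "a \<in> D" "face_orbit \<sigma> (prod.swap a) \<in> R" for a
        using that by blast
      define Dg where "Dg a \<longleftrightarrow> a \<in> D \<and> face_orbit \<sigma> a \<in> R" for a
      have rot: "Dg (u, \<sigma> u x)" if "Dg (u, x)" for u x
      proof -
        have ux: "(u, x) \<in> D" "face_orbit \<sigma> (u, x) \<in> R" using that by (auto simp: Dg_def)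
        have xu: "(x, u) \<in> D" using ux DE Esw by simp
        have "face_orbit \<sigma> (x, u) \<in> R" using H[OF xu] ux by simp
        moreover have "st (x, u) = (u, \<sigma> u x)" by (simp add: st_def face_step_def)
        moreover have "st (x, u) \<in> D" using en.pA[OF xu] .
        moreover have "face_orbit \<sigma> (st (x, u)) = face_orbit \<sigma> (x, u)"
          using fc_eq[OF xu] en.orb_step[OF en.orb_self, of "(x, u)"] unfolding fo by blast
        ultimately show ?thesis by (simp add: Dg_def)
      qed
      have iter: "Dg (u, (\<sigma> u ^^ k) x)" if "Dg (u, x)" for u x k
        using that by (induct k) (auto intro: rot)
      have allw: "Dg (u, w)" if "Dg (u, x)" "E u w" for u x w
      proof -
        have "E u x" using that(1) DE by (auto simp: Dg_def)
        then have "u \<in> V" "x \<in> nbrs E u" using EV1 by (auto simp: nbrs_def)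
        moreover have "w \<in> nbrs E u" using that(2) by (simp add: nbrs_def)
        ultimately obtain k where kw: "(\<sigma> u ^^ k) x = w" using rs unfolding rotation_system_def by blast
        show ?thesis using iter[OF that(1), of k] unfolding kw .
      qed
      obtain a0 where a0: "a0 \<in> D" "face_orbit \<sigma> a0 = Out" using OutF by auto
      have reach: "\<exists>x. Dg (v, x)" if "E\<^sup>*\<^sup>* (fst a0) v" for v
        using that
      proof induct
        case base
        have "Dg a0" using a0 R(1) by (simp add: Dg_def)
        then show ?case by (intro exI[of _ "snd a0"]) simp
      next
        case (step y z)
        then obtain x where "Dg (y, x)" by blast
        then have "Dg (y, z)" using allw step(2) by blast
        then have yz: "(y, z) \<in> D" "face_orbit \<sigma> (y, z) \<in> R" by (auto simp: Dg_def)
        have zy: "(z, y) \<in> D" using yz DE Esw by simp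
        have "face_orbit \<sigma> (z, y) \<in> R" using H[OF zy] yz by simp
        then show ?case using zy by (auto simp: Dg_def)
      qed
      have "face_orbit \<sigma> b \<in> R" if "b \<in> D" for b
      proof -
        obtain u w where b: "b = (u, w)" by (cases b)
        have "E u w" using that b DE by simp
        then have "u \<in> V" using EV1 by blast
        moreover have "fst a0 \<in> V" using a0 DE EV1 by blast
        ultimately obtain x where "Dg (u, x)" using reach conn by blast
        then have "Dg (u, w)" using allw \<open>E u w\<close> by blast
        then show ?thesis using b by (simp add: Dg_def)
      qed
      then have "face_orbit \<sigma> ` D \<subseteq> R" by blast
      then show False using R by blast
    qed
    have euler: "card V + card (face_orbit \<sigma> ` D) = card D div 2 + 2"
      using eul False by (simp add: num_faces_def faces_def D_def)
    have zero_sel: "(\<Sum>b\<in>face_orbit \<sigma> a. real_of_int (sel (d b))) = 0"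
      if aD: "a \<in> D" and ne: "face_orbit \<sigma> a \<noteq> Out" and sel: "sel = fst \<or> sel = snd" for a sel
    proof -
      have "face_orbit \<sigma> a \<in> faces E \<sigma>" using aD by (simp add: faces_def D_def)
      then have "card (orb st a) = 3" using tri ne unfolding fo by auto
      from en.orb_tri[OF aD this] have T: "orb st a = {a, st a, st (st a)}" "st (st (st a)) = a"
        "card {a, st a, st (st a)} = 3" by auto
      obtain x y where a: "a = (x, y)" by (cases a)
      define z where "z = \<sigma> y x"
      have sa: "st a = (y, z)" by (simp add: a z_def st_def face_step_def)
      have ssa: "st (st a) = (z, \<sigma> z y)" unfolding sa by (simp add: st_def face_step_def)
      have "st (st (st a)) = (\<sigma> z y, \<sigma> (\<sigma> z y) z)" unfolding ssa by (simp add: st_def face_step_def)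
      then have w: "\<sigma> z y = x" using T(2) a by simp
      have O: "face_orbit \<sigma> a = {(x, y), (y, z), (z, x)}" using T(1) sa ssa w a fo by simp
      have c3: "card {(x, y), (y, z), (z, x)} = 3" using T(3) sa ssa w a by simp
      have dist: "(x, y) \<noteq> (y, z)" "(x, y) \<noteq> (z, x)" "(y, z) \<noteq> (z, x)"
        using c3 by (auto simp: card_insert_if split: if_splits)
      have inD: "(x, y) \<in> D" "(y, z) \<in> D" "(z, x) \<in> D"
        using fc_sub[OF aD] O by auto
      then have Es: "E x y" "E y z" "E z x" using DE by auto
      have "(\<Sum>b\<in>face_orbit \<sigma> a. real_of_int (sel (d b))) =
            real_of_int (sel (d (x, y)) + sel (d (y, z)) + sel (d (z, x)))"
        unfolding O using dist by simp
      also have "\<dots> = 0" using dtri[OF Es] sel by auto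
      finally show ?thesis .
    qed
    have pot: "\<exists>h. \<forall>a\<in>D. real_of_int (sel (d a)) = h (snd a) - h (fst a)"
      if sel: "sel = fst \<or> sel = snd" for sel
    proof (rule core_exact[where fc = "face_orbit \<sigma>" and Out = Out and V = V and E = E])
      show "finite V" by (rule finV)
      show "D = {(u, v). E u v}" by (simp add: D_def darts_def)
    next
      fix a assume aD: "a \<in> D"
      have "sel (d (prod.swap a)) = - sel (d a)" using danti[OF aD] sel by auto
      then show "real_of_int (sel (d (prod.swap a))) = - real_of_int (sel (d a))" by simp
    next
      show "\<And>u v. E u v \<Longrightarrow> u \<in> V \<and> v \<in> V \<and> u \<noteq> v \<and> E v u" by (rule Esym)
      show "\<And>u v. u \<in> V \<Longrightarrow> v \<in> V \<Longrightarrow> E\<^sup>*\<^sup>* u v" by (rule conn)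
      show "\<And>a. a \<in> D \<Longrightarrow> a \<in> face_orbit \<sigma> a \<and> face_orbit \<sigma> a \<subseteq> D" by (rule fc_sub)
      show "\<And>a b. a \<in> D \<Longrightarrow> b \<in> face_orbit \<sigma> a \<Longrightarrow> face_orbit \<sigma> b = face_orbit \<sigma> a" by (rule fc_eq)
      show "\<And>a k. a \<in> D \<Longrightarrow> (\<Sum>b\<in>face_orbit \<sigma> a. k (snd b) - k (fst b)) = (0::real)" by (rule closed)
      show "Out \<in> face_orbit \<sigma> ` D" by (rule OutF)
      show "\<And>R. Out \<in> R \<Longrightarrow> R \<subseteq> face_orbit \<sigma> ` D \<Longrightarrow> R \<noteq> face_orbit \<sigma> ` D \<Longrightarrow>
         \<exists>a\<in>D. face_orbit \<sigma> a \<notin> R \<and> face_orbit \<sigma> (prod.swap a) \<in> R" by (rule dual)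
      show "card V + card (face_orbit \<sigma> ` D) = card D div 2 + 2" by (rule euler)
      show "\<And>a. a \<in> D \<Longrightarrow> face_orbit \<sigma> a \<noteq> Out \<Longrightarrow> (\<Sum>b\<in>face_orbit \<sigma> a. real_of_int (sel (d b))) = 0"
        by (rule zero_sel[OF _ _ sel])
    qed
    obtain a0 where a0: "a0 \<in> D" "face_orbit \<sigma> a0 = Out" using OutF by auto
    define r where "r = fst a0"
    have rV: "r \<in> V" unfolding r_def using a0 DE EV1 by blast
    have EV: "\<And>u v. E u v \<Longrightarrow> u \<in> V \<and> v \<in> V" using EV1 EV2 by blast
    have kpot: "\<exists>k. k r = 0 \<and> (\<forall>u v. E u v \<longrightarrow> sel (d (u, v)) = k v - k u)"
      if sel: "sel = fst \<or> sel = snd" for sel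
    proof -
      obtain h where h: "\<forall>a\<in>D. real_of_int (sel (d a)) = h (snd a) - h (fst a)"
        using pot[OF sel] by blast
      show ?thesis
        by (rule int_pot[where V = V and h = h, OF conn EV rV]) (use h DE in auto)
    qed
    obtain k1 where k1: "k1 r = 0" "\<forall>u v. E u v \<longrightarrow> fst (d (u, v)) = k1 v - k1 u"
      using kpot[of fst] by auto
    obtain k2 where k2: "k2 r = 0" "\<forall>u v. E u v \<longrightarrow> snd (d (u, v)) = k2 v - k2 u"
      using kpot[of snd] by auto
    obtain p0 where p0: "T_hue p0 = \<psi> r" "T_color p0 = (fst (\<theta> r), snd (\<theta> r))"
      using pt_exists by blast
    define f where "f v = (fst p0 + k1 v, snd p0 + k2 v)" for v
    have inv: "T_hue (f v) = \<psi> v \<and> T_color (f v) = \<theta> v" if "E\<^sup>*\<^sup>* r v" for v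
      using that
    proof induct
      case base
      then show ?case using p0 k1(1) k2(1) by (simp add: f_def)
    next
      case (step y z)
      have yzD: "(y, z) \<in> D" using step(2) DE by simp
      have ez1: "k1 z = k1 y + fst (d (y, z))" using k1(2) step(2) by simp
      have ez2: "k2 z = k2 y + snd (d (y, z))" using k2(2) step(2) by simp
      have hue: "(of_int (fst (d (y, z))) + of_int (snd (d (y, z))) :: 3) = \<psi> z - \<psi> y"
        unfolding d_def using Dst_hue nz[OF yzD] by simp
      have c1: "(of_int (fst (d (y, z))) :: 2) = fst (\<theta> z) - fst (\<theta> y)"
        unfolding d_def using Dst_c1 nz[OF yzD] by simp
      have c2: "(of_int (snd (d (y, z))) :: 2) = snd (\<theta> z) - snd (\<theta> y)"
        unfolding d_def using Dst_c2 nz[OF yzD] by simp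
      have "T_hue (f z) = T_hue (f y) + (of_int (fst (d (y, z))) + of_int (snd (d (y, z))) :: 3)"
        by (simp add: T_hue_def f_def ez1 ez2 algebra_simps)
      also have "\<dots> = \<psi> z" using step(3) hue by simp
      finally have H1: "T_hue (f z) = \<psi> z" .
      have "T_color (f z) = (fst (T_color (f y)) + of_int (fst (d (y, z))),
                             snd (T_color (f y)) + of_int (snd (d (y, z))))"
        by (simp add: T_color_def f_def ez1 ez2 algebra_simps)
      also have "\<dots> = \<theta> z" using step(3) c1 c2 by (simp add: prod_eq_iff)
      finally show ?case using H1 by simp
    qed
    have bdV: "bd_verts V E Out = fst ` Out" using False by (simp add: bd_verts_def)
    have OutD: "Out \<subseteq> D" using fc_sub[OF a0(1)] a0(2) by simp
    have adjE: "E u v" if "bd_adj Out u v" for u v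
    proof -
      have "(u, v) \<in> D \<or> (v, u) \<in> D" using that OutD unfolding bd_adj_def by blast
      then show ?thesis using DE Esw by auto
    qed
    have bdsub: "bd_verts V E Out \<subseteq> V"
    proof
      fix x assume "x \<in> bd_verts V E Out"
      then obtain b where "b \<in> Out" "x = fst b" using bdV by blast
      then show "x \<in> V" using OutD DE EV1 by blast
    qed
    have invV: "T_hue (f v) = \<psi> v \<and> T_color (f v) = \<theta> v" if "v \<in> V" for v
      using inv conn[OF rV that] by blast
    show ?thesis unfolding viable_def dappled_hom_T_def
    proof (intro exI[of _ f] conjI ballI impI)
      fix u v assume u: "u \<in> bd_verts V E Out" and v: "v \<in> bd_verts V E Out" and a: "bd_adj Out u v"
      have Euv: "E u v" using adjE[OF a] .
      then have uvD: "(u, v) \<in> D" using DE by simp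
      have "(fst (f v) - fst (f u), snd (f v) - snd (f u)) = d (u, v)"
        using k1(2) k2(2) Euv by (simp add: f_def prod_eq_iff)
      also have "\<dots> \<in> {(1,0), (-1,0), (0,1), (0,-1), (1,1), (-1,-1)}"
        unfolding d_def using Dst_adj nz[OF uvD] by simp
      finally show "T_adj (f u) (f v)" by (simp add: T_adj_def)
    next
      fix u assume u: "u \<in> bd_verts V E Out"
      then have "u \<in> V" using bdsub by blast
      then show "T_hue (f u) = \<psi> u" using invV by blast
      show "T_color (f u) = \<phi> u" using invV[OF \<open>u \<in> V\<close>] th(2) u by simp
    qed
  qed
qed


end
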